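(* There exist constants $C > 0$ and $\epsilon_0 \in (0, 1/2)$ such that for all $\epsilon \in (0, \epsilon_0)$ and all $u \in \mathrm{H}^{1/2}_w(\mathbb{R})$ one has $u \in \mathrm{H}^{1/2-\epsilon}(\mathbb{R})$ and $$\|u\|_{\mathrm{L}^2} + |u|_{\mathrm{H}^{1/2-\epsilon}} \leq C \epsilon^{-1/2}\left(\|u\|_{\mathrm{L}^2} + |u|_{\mathrm{H}^{1/2}_w}\right);$$ that is, the canonical injection $\mathrm{H}^{1/2}_w(\mathbb{R}) \to \mathrm{H}^{1/2-\epsilon}(\mathbb{R})$ has norm of order $\epsilon^{-1/2}$ for small $\epsilon$.
   Context: For $s \in ]0,1[$, the Slobodetski seminorm is $|u|_{\mathrm{H}^{s}}^2 = \iint_{\mathbb{R}^2} \frac{|u(x+y)-u(x)|^2}{|y|^{1+2s}}\,\mathrm{d}x\,\mathrm{d}y$, and $\mathrm{H}^s(\mathbb{R})$ is equipped with the norm $\|u\|_{\mathrm{L}^2} + |u|_{\mathrm{H}^s}$. The space $\mathrm{H}^{1/2}_w(\mathbb{R})$ consists of $u \in \mathrm{L}^2(\mathbb{R})$ for which there is $C \geq 0$ with $\|u - u(\cdot+y)\|_{\mathrm{L}^2} \leq C|y|^{1/2}$ for all $y \in \mathbb{R}$; the best such $C$ is denoted $|u|_{\mathrm{H}^{1/2}_w}$, and the norm is $\|u\|_{\mathrm{L}^2} + |u|_{\mathrm{H}^{1/2}_w}$. *)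

theory Defs
  imports "HOL-Analysis.Analysis"
begin

definition L2 :: "(real \<Rightarrow> real) set" where
  "L2 = {u. u \<in> borel_measurable lborel \<and> integrable lborel (\<lambda>x. (u x)\<^sup>2)}"

definition L2_norm :: "(real \<Rightarrow> real) \<Rightarrow> real" where
  "L2_norm u = sqrt (LINT x|lborel. (u x)\<^sup>2)"

definition slob_sq :: "real \<Rightarrow> (real \<Rightarrow> real) \<Rightarrow> ennreal" where
  "slob_sq s u = (\<integral>\<^sup>+ p. ennreal ((u (fst p + snd p) - u (fst p))\<^sup>2 / \<bar>snd p\<bar> powr (1 + 2 * s))
                      \<partial>(lborel :: (real \<times> real) measure))"

definition Hs :: "real \<Rightarrow> (real \<Rightarrow> real) set" where
  "Hs s = {u. u \<in> L2 \<and> slob_sq s u < \<infinity>}"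

definition Hs_semi :: "real \<Rightarrow> (real \<Rightarrow> real) \<Rightarrow> real" where
  "Hs_semi s u = sqrt (enn2real (slob_sq s u))"

definition Hw_ok :: "(real \<Rightarrow> real) \<Rightarrow> real \<Rightarrow> bool" where
  "Hw_ok u C \<longleftrightarrow> C \<ge> 0 \<and> (\<forall>y. L2_norm (\<lambda>x. u x - u (x + y)) \<le> C * \<bar>y\<bar> powr (1/2))"

definition Hw :: "(real \<Rightarrow> real) set" where
  "Hw = {u. u \<in> L2 \<and> (\<exists>C. Hw_ok u C)}"

definition Hw_semi :: "(real \<Rightarrow> real) \<Rightarrow> real" where
  "Hw_semi u = Inf {C. Hw_ok u C}"

end

theory Submission imports Defs begin

lemma transl:
  assumes "u \<in> L2"
  shows "integrable lborel (\<lambda>x. (u (x+y))\<^sup>2)" "(LINT x|lborel. (u (x+y))\<^sup>2) = (LINT x|lborel. (u x)\<^sup>2)"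
proof -
  have i: "integrable lborel (\<lambda>x. (u x)\<^sup>2)" using assms by (simp add: L2_def)
  show "integrable lborel (\<lambda>x. (u (x+y))\<^sup>2)"
    using lborel_integrable_real_affine[OF i, of 1 y] by (simp add: add.commute)
  show "(LINT x|lborel. (u (x+y))\<^sup>2) = (LINT x|lborel. (u x)\<^sup>2)"
    using lborel_integral_real_affine[of 1 "\<lambda>x. (u x)\<^sup>2" y] by (simp add: add.commute)
qed

lemma diffint:
  assumes "u \<in> L2"
  shows "integrable lborel (\<lambda>x. (u x - u (x+y))\<^sup>2)"
    "(LINT x|lborel. (u x - u (x+y))\<^sup>2) \<le> 4 * (LINT x|lborel. (u x)\<^sup>2)"
proof -
  have m[measurable]: "u \<in> borel_measurable borel" using assms by (simp add: L2_def)
  have i: "integrable lborel (\<lambda>x. (u x)\<^sup>2)" using assms by (simp add: L2_def)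
  have i2: "integrable lborel (\<lambda>x. 2*(u x)\<^sup>2 + 2*(u (x+y))\<^sup>2)"
    using i transl[OF assms] by auto
  have pt: "(a - b)\<^sup>2 \<le> 2*a\<^sup>2 + 2*b\<^sup>2" for a b :: real
    by (smt (verit) sum_squares_ge_zero power2_diff power2_sum zero_le_power2)
  show ii: "integrable lborel (\<lambda>x. (u x - u (x+y))\<^sup>2)"
    by (rule Bochner_Integration.integrable_bound[OF i2]) (auto simp: pt)
  have "(LINT x|lborel. (u x - u (x+y))\<^sup>2) \<le> (LINT x|lborel. 2*(u x)\<^sup>2 + 2*(u (x+y))\<^sup>2)"
    by (rule integral_mono[OF ii i2]) (simp add: pt)
  also have "\<dots> = 4 * (LINT x|lborel. (u x)\<^sup>2)"
    using i transl[OF assms] by simp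
  finally show "(LINT x|lborel. (u x - u (x+y))\<^sup>2) \<le> 4 * (LINT x|lborel. (u x)\<^sup>2)" .
qed

lemma inner:
  assumes "u \<in> L2" "a \<ge> 0"
  shows "(\<integral>\<^sup>+x. ennreal ((u (x + y) - u x)\<^sup>2 / a) \<partial>lborel) = ennreal ((LINT x|lborel. (u x - u (x+y))\<^sup>2) / a)"
proof -
  have e: "(u (x + y) - u x)\<^sup>2 / a = (u x - u (x+y))\<^sup>2 / a" for x by (simp add: power2_commute)
  show ?thesis unfolding e
    by (subst nn_integral_eq_integral) (auto intro: integrable_divide diffint[OF assms(1)] simp: assms(2))
qed

lemma semi_ok:
  assumes "u \<in> Hw"
  shows "Hw_ok u (Hw_semi u)"
proof -
  obtain C where C: "Hw_ok u C" using assms by (auto simp: Hw_def)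
  have bdd: "bdd_below {C. Hw_ok u C}" by (auto simp: Hw_ok_def bdd_below_def)
  have ne: "{C. Hw_ok u C} \<noteq> {}" using C by auto
  have nn: "0 \<le> Hw_semi u" unfolding Hw_semi_def
    by (rule cInf_greatest[OF ne]) (auto simp: Hw_ok_def)
  show ?thesis unfolding Hw_ok_def
  proof (intro conjI nn allI)
    fix y :: real
    show "L2_norm (\<lambda>x. u x - u (x + y)) \<le> Hw_semi u * \<bar>y\<bar> powr (1/2)"
    proof (cases "y = 0")
      case True thus ?thesis by (simp add: L2_norm_def)
    next
      case False
      hence p: "\<bar>y\<bar> powr (1/2) > 0" by simp
      have "L2_norm (\<lambda>x. u x - u (x + y)) / \<bar>y\<bar> powr (1/2) \<le> Hw_semi u"
        unfolding Hw_semi_def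
        by (rule cInf_greatest[OF ne]) (auto simp: Hw_ok_def p divide_le_eq)
      thus ?thesis using p by (simp add: divide_le_eq)
    qed
  qed
qed

definition hh :: "real \<Rightarrow> real \<Rightarrow> real \<Rightarrow> real \<Rightarrow> ennreal" where
  "hh e A B y = ennreal (A * y powr (2*e-1)) * indicator {0..1} y + ennreal (B * y powr (2*e-2)) * indicator {1..} y"

lemma hh_int:
  assumes "0 < e" "e < 1/2" "A \<ge> 0" "B \<ge> 0"
  shows "(\<integral>\<^sup>+y. hh e A B y \<partial>lborel) = ennreal (A/(2*e)) + ennreal (B/(1-2*e))"
proof -
  have h1: "((\<lambda>y. A * y powr (2*e-1)) has_integral (A/(2*e))) {0..1}"
    using has_integral_mult_right[OF has_integral_powr_from_0[of "2*e-1" 1], of A] assms by simp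
  have h2: "((\<lambda>y. B * y powr (2*e-2)) has_integral (B/(1-2*e))) {1..}"
  proof -
    have "((\<lambda>y. B * y powr (2*e-2)) has_integral (B * (-(1 powr (2*e-2+1)) / (2*e-2+1)))) {1..}"
      using has_integral_mult_right[OF has_integral_powr_to_inf[of "2*e-2" 1], of B] assms by simp
    moreover have "B * (-(1 powr (2*e-2+1)) / (2*e-2+1)) = B/(1-2*e)"
      using assms by (simp add: field_simps)
    ultimately show ?thesis by simp
  qed
  have m1: "(\<lambda>y. ennreal (A * y powr (2*e-1)) * indicator {0..1} y) \<in> borel_measurable lborel" by measurable
  have m2: "(\<lambda>y. ennreal (B * y powr (2*e-2)) * indicator {1..} y) \<in> borel_measurable lborel" by measurable
  show ?thesis unfolding hh_def
    apply (subst nn_integral_add[OF m1 m2])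
    apply (subst nn_integral_has_integral_lebesgue'[OF _ h1])
    using assms apply simp
    apply (subst nn_integral_has_integral_lebesgue'[OF _ h2])
    using assms apply simp
    by simp
qed

lemma hh_meas[measurable]: "hh e A B \<in> borel_measurable borel"
  unfolding hh_def by measurable

lemma hh_sym:
  "(\<integral>\<^sup>+y. hh e A B (-y) \<partial>lborel) = (\<integral>\<^sup>+y. hh e A B y \<partial>lborel)"
proof -
  have m: "hh e A B \<in> borel_measurable borel" unfolding hh_def by measurable
  show ?thesis using nn_integral_real_affine[OF m, of "-1" 0] by simp
qed

lemma pw:
  assumes u: "u \<in> Hw" and e: "0 < e" "e < 1/2"
  shows "ennreal ((LINT x|lborel. (u x - u (x+y))\<^sup>2) / \<bar>y\<bar> powr (2-2*e))
     \<le> hh e ((Hw_semi u)\<^sup>2) (4 * (LINT x|lborel. (u x)\<^sup>2)) y + hh e ((Hw_semi u)\<^sup>2) (4 * (LINT x|lborel. (u x)\<^sup>2)) (-y)"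
proof -
  define D where "D = (LINT x|lborel. (u x - u (x+y))\<^sup>2)"
  define W where "W = Hw_semi u"
  define I where "I = (LINT x|lborel. (u x)\<^sup>2)"
  have uL: "u \<in> L2" using u by (simp add: Hw_def)
  have D0: "D \<ge> 0" unfolding D_def by (rule integral_nonneg_AE) simp
  have I0: "I \<ge> 0" unfolding I_def by (rule integral_nonneg_AE) simp
  have DI: "D \<le> 4 * I" unfolding D_def I_def by (rule diffint(2)[OF uL])
  have ok: "Hw_ok u W" unfolding W_def by (rule semi_ok[OF u])
  have W0: "W \<ge> 0" using ok by (simp add: Hw_ok_def)
  have "sqrt D \<le> W * \<bar>y\<bar> powr (1/2)" using ok by (simp add: Hw_ok_def L2_norm_def D_def)
  hence "(sqrt D)\<^sup>2 \<le> (W * \<bar>y\<bar> powr (1/2))\<^sup>2" using D0 by (intro power_mono) simp_all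
  moreover have "(\<bar>y\<bar> powr (1/2))\<^sup>2 = \<bar>y\<bar>"
    by (simp add: powr_powr flip: powr_realpow')
  ultimately have DW: "D \<le> W\<^sup>2 * \<bar>y\<bar>" using D0 by (simp add: power_mult_distrib)
  have key: "ennreal (D / \<bar>y\<bar> powr (2-2*e)) \<le> hh e (W\<^sup>2) (4 * I) \<bar>y\<bar>"
  proof (cases "y = 0")
    case True thus ?thesis by simp
  next
    case False
    hence yp: "\<bar>y\<bar> > 0" by simp
    have pp: "\<bar>y\<bar> powr (2-2*e) > 0" using yp by simp
    show ?thesis
    proof (cases "\<bar>y\<bar> \<le> 1")
      case True
      have "D / \<bar>y\<bar> powr (2-2*e) \<le> W\<^sup>2 * \<bar>y\<bar> / \<bar>y\<bar> powr (2-2*e)"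
        using DW pp by (simp add: divide_right_mono)
      also have "\<dots> = W\<^sup>2 * \<bar>y\<bar> powr (2*e-1)"
      proof -
        have "\<bar>y\<bar> / \<bar>y\<bar> powr (2-2*e) = \<bar>y\<bar> powr 1 / \<bar>y\<bar> powr (2-2*e)" using yp by simp
        also have "\<dots> = \<bar>y\<bar> powr (1 - (2-2*e))" by (simp only: powr_diff)
        also have "1 - (2-2*e) = 2*e-1" by simp
        finally have "\<bar>y\<bar> / \<bar>y\<bar> powr (2-2*e) = \<bar>y\<bar> powr (2*e-1)" .
        thus ?thesis by (metis times_divide_eq_right)
      qed
      finally have "D / \<bar>y\<bar> powr (2-2*e) \<le> W\<^sup>2 * \<bar>y\<bar> powr (2*e-1)" .
      moreover have "hh e (W\<^sup>2) (4 * I) \<bar>y\<bar> \<ge> ennreal (W\<^sup>2 * \<bar>y\<bar> powr (2*e-1))"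
        using True unfolding hh_def by (simp add: indicator_def)
      ultimately show ?thesis by (meson ennreal_leI order_trans)
    next
      case False
      have "D / \<bar>y\<bar> powr (2-2*e) \<le> 4 * I / \<bar>y\<bar> powr (2-2*e)"
        using DI pp by (simp add: divide_right_mono)
      also have "\<dots> = 4 * I * \<bar>y\<bar> powr (2*e-2)"
        by (simp add: powr_minus_divide[symmetric] divide_inverse powr_minus[symmetric])
      finally have "D / \<bar>y\<bar> powr (2-2*e) \<le> 4 * I * \<bar>y\<bar> powr (2*e-2)" .
      moreover have "hh e (W\<^sup>2) (4 * I) \<bar>y\<bar> \<ge> ennreal (4 * I * \<bar>y\<bar> powr (2*e-2))"
        using False unfolding hh_def by (simp add: indicator_def)
      ultimately show ?thesis by (meson ennreal_leI order_trans)
    qed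
  qed
  have "hh e (W\<^sup>2) (4 * I) \<bar>y\<bar> \<le> hh e (W\<^sup>2) (4 * I) y + hh e (W\<^sup>2) (4 * I) (-y)"
    by (cases "y \<ge> 0") (auto simp: hh_def indicator_def)
  with key show ?thesis unfolding D_def W_def I_def by (rule order_trans)
qed

lemma slob_bound:
  assumes u: "u \<in> Hw" and e: "0 < e" "e < 1/2"
  shows "slob_sq (1/2 - e) u \<le> ennreal ((Hw_semi u)\<^sup>2 / e + 8 * (LINT x|lborel. (u x)\<^sup>2) / (1 - 2*e))"
proof -
  define W where "W = Hw_semi u"
  define I where "I = (LINT x|lborel. (u x)\<^sup>2)"
  have uL: "u \<in> L2" using u by (simp add: Hw_def)
  have m[measurable]: "u \<in> borel_measurable borel" using uL by (simp add: L2_def)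
  have I0: "I \<ge> 0" unfolding I_def by (rule integral_nonneg_AE) simp
  have ex: "1 + 2 * (1/2 - e) = 2 - 2*e" by simp
  have meas: "(\<lambda>p::real\<times>real. ennreal ((u (fst p + snd p) - u (fst p))\<^sup>2 / \<bar>snd p\<bar> powr (2 - 2*e)))
      \<in> borel_measurable (lborel \<Otimes>\<^sub>M lborel)" by measurable
  have "slob_sq (1/2 - e) u = (\<integral>\<^sup>+p. ennreal ((u (fst p + snd p) - u (fst p))\<^sup>2 / \<bar>snd p\<bar> powr (2 - 2*e)) \<partial>(lborel \<Otimes>\<^sub>M lborel))"
    unfolding slob_sq_def ex lborel_prod ..
  also have "\<dots> = (\<integral>\<^sup>+y. \<integral>\<^sup>+x. ennreal ((u (x + y) - u x)\<^sup>2 / \<bar>y\<bar> powr (2 - 2*e)) \<partial>lborel \<partial>lborel)"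
    using lborel_pair.nn_integral_snd[OF meas] by simp
  also have "\<dots> = (\<integral>\<^sup>+y. ennreal ((LINT x|lborel. (u x - u (x+y))\<^sup>2) / \<bar>y\<bar> powr (2 - 2*e)) \<partial>lborel)"
    by (simp add: inner[OF uL])
  also have "\<dots> \<le> (\<integral>\<^sup>+y. hh e (W\<^sup>2) (4 * I) y + hh e (W\<^sup>2) (4 * I) (-y) \<partial>lborel)"
    by (rule nn_integral_mono) (use pw[OF u e] in \<open>simp add: W_def I_def\<close>)
  also have "\<dots> = (\<integral>\<^sup>+y. hh e (W\<^sup>2) (4 * I) y \<partial>lborel) + (\<integral>\<^sup>+y. hh e (W\<^sup>2) (4 * I) (-y) \<partial>lborel)"
    by (rule nn_integral_add) measurable
  also have "\<dots> = 2 * (ennreal (W\<^sup>2/(2*e)) + ennreal (4*I/(1-2*e)))"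
  proof -
    have "0 \<le> 4*I" using I0 by simp
    from hh_int[OF e zero_le_power2 this] show ?thesis by (simp only: hh_sym mult_2)
  qed
  also have "\<dots> = ennreal (W\<^sup>2 / e + 8 * I / (1 - 2*e))"
  proof -
    have a: "W\<^sup>2/(2*e) \<ge> 0" "4*I/(1-2*e) \<ge> 0" using e I0 by auto
    have "2 * (ennreal (W\<^sup>2/(2*e)) + ennreal (4*I/(1-2*e))) = ennreal (2 * (W\<^sup>2/(2*e) + 4*I/(1-2*e)))"
    proof -
      have "ennreal (W\<^sup>2/(2*e)) + ennreal (4*I/(1-2*e)) = ennreal (W\<^sup>2/(2*e) + 4*I/(1-2*e))"
        using a by (rule ennreal_plus[symmetric])
      moreover have "(2::ennreal) * ennreal c = ennreal (2 * c)" if "c \<ge> 0" for c :: real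
        using that by (simp add: ennreal_mult)
      ultimately show ?thesis using a by simp
    qed
    also have "2 * (W\<^sup>2/(2*e) + 4*I/(1-2*e)) = W\<^sup>2 / e + 8 * I / (1 - 2*e)"
      using e by (simp add: field_simps)
    finally show ?thesis .
  qed
  finally show ?thesis unfolding W_def I_def .
qed

theorem proposition4:
  shows "\<exists>C>0. \<exists>\<epsilon>0. 0 < \<epsilon>0 \<and> \<epsilon>0 < 1/2 \<and>
           (\<forall>\<epsilon>. 0 < \<epsilon> \<and> \<epsilon> < \<epsilon>0 \<longrightarrow>
              (\<forall>u \<in> Hw. u \<in> Hs (1/2 - \<epsilon>) \<and>
                 L2_norm u + Hs_semi (1/2 - \<epsilon>) u
                   \<le> C * \<epsilon> powr (-1/2) * (L2_norm u + Hw_semi u)))"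
proof -
  have main: "u \<in> Hs (1/2 - e) \<and> L2_norm u + Hs_semi (1/2 - e) u \<le> 5 * e powr (-1/2) * (L2_norm u + Hw_semi u)"
    if e: "0 < e \<and> e < 1/4" and u: "u \<in> Hw" for e u
  proof
  have e': "0 < e" "e < 1/2" using e by auto
  define W where "W = Hw_semi u"
  define I where "I = (LINT x|lborel. (u x)\<^sup>2)"
  define L where "L = L2_norm u"
  have uL: "u \<in> L2" using u by (simp add: Hw_def)
  have I0: "I \<ge> 0" unfolding I_def by (rule integral_nonneg_AE) simp
  have LI: "L = sqrt I" unfolding L_def I_def L2_norm_def ..
  have L0: "L \<ge> 0" using LI I0 by simp
  have W0: "W \<ge> 0" using semi_ok[OF u] by (simp add: Hw_ok_def W_def)
  define B where "B = W\<^sup>2 / e + 8 * I / (1 - 2*e)"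
  have B0: "B \<ge> 0" using e I0 unfolding B_def by auto
  have sb: "slob_sq (1/2 - e) u \<le> ennreal B" unfolding B_def W_def I_def by (rule slob_bound[OF u e'])
  hence fin: "slob_sq (1/2 - e) u < \<infinity>" using le_less_trans by fastforce
  show "u \<in> Hs (1/2 - e)" using uL fin by (simp add: Hs_def)
  have "enn2real (slob_sq (1/2 - e) u) \<le> B"
    using enn2real_mono[OF sb] B0 by simp
  hence "Hs_semi (1/2 - e) u \<le> sqrt B" unfolding Hs_semi_def by simp
  also have "B \<le> W\<^sup>2 / e + 16 * I"
  proof -
    have "8 * I / (1 - 2*e) \<le> 16 * I" using e I0 by (simp add: field_simps) (intro mult_left_le; linarith)
    thus ?thesis unfolding B_def by simp
  qed
  hence "sqrt B \<le> sqrt (W\<^sup>2 / e + 16 * I)" by simp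
  also have "\<dots> \<le> sqrt (W\<^sup>2 / e) + sqrt (16 * I)"
    by (rule sqrt_add_le_add_sqrt) (use e I0 in auto)
  also have "sqrt (W\<^sup>2 / e) = W / sqrt e" using W0 by (simp add: real_sqrt_divide)
  also have "sqrt (16 * I) = 4 * L" using LI by (simp add: real_sqrt_mult)
  finally have hs: "Hs_semi (1/2 - e) u \<le> W / sqrt e + 4 * L" .
  have ep: "e powr (-1/2) = 1 / sqrt e" using e
    by (simp add: powr_minus_divide sqrt_def powr_half_sqrt)
  have se: "sqrt e > 0" "sqrt e \<le> 1" using e by auto
  have "L + Hs_semi (1/2 - e) u \<le> L + W / sqrt e + 4 * L" using hs by simp
  also have "\<dots> \<le> 5 * (1 / sqrt e) * (L + W)"
  proof -
    have "L \<le> L / sqrt e" using se L0 by (simp add: le_divide_eq mult_left_le)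
    moreover have "W / sqrt e \<ge> 0" using W0 se by simp
    moreover have "5 * (1 / sqrt e) * (L + W) = 5 * (L / sqrt e) + 5 * (W / sqrt e)"
      by (simp add: add_divide_distrib distrib_left)
    ultimately show ?thesis by linarith
  qed
  finally show "L2_norm u + Hs_semi (1/2 - e) u \<le> 5 * e powr (-1/2) * (L2_norm u + Hw_semi u)"
    unfolding ep L_def W_def .
  qed
  show ?thesis
    by (rule exI[of _ 5], simp, rule exI[of _ "1/4"]) (use main in auto)
qed

end
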